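(* For any $n$-node graph $G$ and any $r\in\mathbb{N}$, the number of $r$-cycles in $G$ can be counted within $(r-1)\cdot\mathcal{O}(\log n)$ rounds of the $\mathsf{HYBRID}$ model.
   Context: Distributed setting: $n$ nodes with unique IDs in $\{1,\dots,n\}$; local communication graph $G$ undirected; each node initially knows only its neighbors' IDs; synchronous rounds, unlimited local computation. In the $\mathsf{HYBRID}$ model, in every round each node may send a message of arbitrary size to each neighbor (local mode) and may additionally send and receive $\mathcal{O}(\log n)$-bit messages to/from up to $\mathcal{O}(\log n)$ arbitrary nodes (global mode); excess messages are dropped arbitrarily. An $r$-cycle is a cycle of length $r$; counting means every node learns the total number of $r$-cycles in $G$. *)

theory Defs
  imports Complex_Main
begin

definition simple_graph :: "nat \<Rightarrow> (nat \<Rightarrow> nat \<Rightarrow> bool) \<Rightarrow> bool" where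
  "simple_graph n E \<longleftrightarrow> (\<forall>u v. E u v \<longrightarrow> E v u) \<and> (\<forall>v. \<not> E v v)
                        \<and> (\<forall>u v. E u v \<longrightarrow> u \<in> {1..n} \<and> v \<in> {1..n})"

text \<open>The r-cycles of G, each identified with its edge set (a cycle subgraph).\<close>
definition r_cycles :: "nat \<Rightarrow> (nat \<Rightarrow> nat \<Rightarrow> bool) \<Rightarrow> nat \<Rightarrow> nat set set set" where
  "r_cycles n E r = {C. \<exists>f. 3 \<le> r \<and> inj_on f {..<r} \<and> f ` {..<r} \<subseteq> {1..n}
        \<and> (\<forall>i<r. E (f i) (f (Suc i mod r)))
        \<and> C = (\<lambda>i. {f i, f (Suc i mod r)}) ` {..<r}}"

definition num_r_cycles :: "nat \<Rightarrow> (nat \<Rightarrow> nat \<Rightarrow> bool) \<Rightarrow> nat \<Rightarrow> nat" where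
  "num_r_cycles n E r = card (r_cycles n E r)"

text \<open>Node states, local messages and global
  messages are encoded as natural numbers (unlimited local computation / memory).
  init n id neighbours; lmsg state dest; gmsg state = list of (destination, message);
  step state local_inbox global_inbox; out state.\<close>
record hyb_alg =
  h_init :: "nat \<Rightarrow> nat \<Rightarrow> nat set \<Rightarrow> nat"
  h_lmsg :: "nat \<Rightarrow> nat \<Rightarrow> nat"
  h_gmsg :: "nat \<Rightarrow> (nat \<times> nat) list"
  h_step :: "nat \<Rightarrow> (nat \<Rightarrow> nat) \<Rightarrow> (nat \<times> nat) set \<Rightarrow> nat"
  h_out  :: "nat \<Rightarrow> nat"

definition cap :: "real \<Rightarrow> nat \<Rightarrow> nat" where
  "cap c n = nat \<lceil>c * log 2 (real n)\<rceil>"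

definition g_sent :: "hyb_alg \<Rightarrow> nat \<Rightarrow> (nat \<Rightarrow> nat) \<Rightarrow> (nat \<times> nat \<times> nat) set" where
  "g_sent A n st = {(u, w, m). u \<in> {1..n} \<and> w \<in> {1..n} \<and> (w, m) \<in> set (h_gmsg A (st u))}"

text \<open>Admissible delivery: every receiver w gets an arbitrary subset of the messages
  addressed to it, of size min(k, number addressed to it); excess dropped arbitrarily.\<close>
definition admissible_delivery :: "nat \<Rightarrow> nat \<Rightarrow> (nat \<times> nat \<times> nat) set \<Rightarrow> (nat \<times> nat \<times> nat) set \<Rightarrow> bool" where
  "admissible_delivery n k S D \<longleftrightarrow> D \<subseteq> S \<and>
     (\<forall>w\<in>{1..n}. card {(u, m). (u, w, m) \<in> D} = min k (card {(u, m). (u, w, m) \<in> S}))"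

text \<open>s t v = state of node v after t rounds, for some adversarial choice of drops.\<close>
definition hyb_exec :: "hyb_alg \<Rightarrow> nat \<Rightarrow> (nat \<Rightarrow> nat \<Rightarrow> bool) \<Rightarrow> nat \<Rightarrow> (nat \<Rightarrow> nat \<Rightarrow> nat) \<Rightarrow> bool" where
  "hyb_exec A n E k s \<longleftrightarrow>
     (\<forall>v\<in>{1..n}. s 0 v = h_init A n v {u \<in> {1..n}. E v u}) \<and>
     (\<forall>t. \<exists>D. admissible_delivery n k (g_sent A n (s t)) D \<and>
        (\<forall>v\<in>{1..n}. s (Suc t) v =
           h_step A (s t v) (\<lambda>u. if u \<in> {1..n} \<and> E u v then h_lmsg A (s t u) v else 0)
                  {(u, m). (u, v, m) \<in> D}))"

definition respects_global_bw :: "nat \<Rightarrow> (nat \<times> nat) list \<Rightarrow> bool" where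
  "respects_global_bw k ms \<longleftrightarrow> length ms \<le> k \<and> (\<forall>(w, m) \<in> set ms. m < 2 ^ k)"

end

theory Submission
  imports Defs "HOL-Library.Countable" "HOL-Library.FuncSet"
begin

datatype St = St (sid: nat) (snn: nat) (stt: nat) (sK: "(nat \<times> nat) list")
  (sF: "(nat \<times> nat \<times> nat) list") (sG: "(nat \<times> nat) list")

instance St :: countable by countable_datatype

definition digit :: "nat \<Rightarrow> nat \<Rightarrow> nat \<Rightarrow> nat" where
  "digit b j x = x div b ^ j mod b"

definition cnt :: "nat \<Rightarrow> St \<Rightarrow> nat" where
  "cnt r \<sigma> = card {C \<in> r_cycles (snn \<sigma>) (\<lambda>a b. (a, b) \<in> set (sK \<sigma>)) r. Min (\<Union>C) = sid \<sigma>}"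

definition chval :: "St \<Rightarrow> nat \<Rightarrow> nat \<Rightarrow> nat" where
  "chval \<sigma> ch j = (if ch \<le> snn \<sigma> then (SOME x. (ch, j, x) \<in> set (sF \<sigma>)) else 0)"

definition chok :: "St \<Rightarrow> nat \<Rightarrow> nat \<Rightarrow> bool" where
  "chok \<sigma> ch j = (snn \<sigma> < ch \<or> (\<exists>x. (ch, j, x) \<in> set (sF \<sigma>)))"

definition ownnew :: "nat \<Rightarrow> St \<Rightarrow> (nat \<times> nat \<times> nat) list" where
  "ownnew r \<sigma> = (if r \<le> stt \<sigma> then
     map (\<lambda>j. (sid \<sigma>, j, digit (snn \<sigma>) j (cnt r \<sigma>) + chval \<sigma> (2 * sid \<sigma>) j + chval \<sigma> (2 * sid \<sigma> + 1) j))
       (filter (\<lambda>j. chok \<sigma> (2 * sid \<sigma>) j \<and> chok \<sigma> (2 * sid \<sigma> + 1) j) [0..<Suc r])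
   else [])"

definition rcvF :: "nat \<Rightarrow> St \<Rightarrow> (nat \<times> nat) set \<Rightarrow> (nat \<times> nat \<times> nat) list" where
  "rcvF r \<sigma> I = concat (map (\<lambda>ch. if (\<exists>m. (ch, m) \<in> I) then [(ch, stt \<sigma> mod Suc r, SOME m. (ch, m) \<in> I)] else [])
      [2 * sid \<sigma>, 2 * sid \<sigma> + 1])"

definition rcvG :: "nat \<Rightarrow> St \<Rightarrow> (nat \<times> nat) set \<Rightarrow> (nat \<times> nat) list" where
  "rcvG r \<sigma> I = (if 2 \<le> sid \<sigma> \<and> (\<exists>m. (sid \<sigma> div 2, m) \<in> I)
      then [(stt \<sigma> mod Suc r, SOME m. (sid \<sigma> div 2, m) \<in> I)] else [])"

definition newK :: "St \<Rightarrow> (nat \<Rightarrow> nat) \<Rightarrow> (nat \<times> nat) list" where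
  "newK \<sigma> li = sK \<sigma> @ concat (map (\<lambda>u. if li u = 0 then [] else from_nat (li u - 1)) [1..<Suc (snn \<sigma>)])"

definition stepS :: "nat \<Rightarrow> St \<Rightarrow> (nat \<Rightarrow> nat) \<Rightarrow> (nat \<times> nat) set \<Rightarrow> St" where
  "stepS r \<sigma> li I = St (sid \<sigma>) (snn \<sigma>) (Suc (stt \<sigma>)) (newK \<sigma> li)
      (sF \<sigma> @ rcvF r \<sigma> I @ ownnew r \<sigma>) (sG \<sigma> @ rcvG r \<sigma> I)"

definition initS :: "nat \<Rightarrow> nat \<Rightarrow> nat set \<Rightarrow> St" where
  "initS n v N = St v n 0 (concat (map (\<lambda>u. if u \<in> N then [(v, u)] else []) [1..<Suc n])) [] []"

definition knowsT :: "St \<Rightarrow> nat \<Rightarrow> nat \<Rightarrow> bool" where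
  "knowsT \<sigma> j x = (if sid \<sigma> = 1 then (1, j, x) \<in> set (sF \<sigma>) else (j, x) \<in> set (sG \<sigma>))"

definition upv :: "St \<Rightarrow> nat \<Rightarrow> nat" where
  "upv \<sigma> j = (SOME x. (sid \<sigma>, j, x) \<in> set (sF \<sigma>))"

definition dnv :: "St \<Rightarrow> nat \<Rightarrow> nat" where
  "dnv \<sigma> j = (SOME x. knowsT \<sigma> j x)"

definition msgf :: "nat \<Rightarrow> St \<Rightarrow> nat \<Rightarrow> nat" where
  "msgf r \<sigma> w = (if w = sid \<sigma> div 2 then upv \<sigma> (stt \<sigma> mod Suc r) else dnv \<sigma> (stt \<sigma> mod Suc r))"

definition sendp :: "nat \<Rightarrow> St \<Rightarrow> nat \<Rightarrow> bool" where
  "sendp r \<sigma> w = (3 \<le> snn \<sigma> \<and> 1 \<le> sid \<sigma> \<and> msgf r \<sigma> w < snn \<sigma> ^ 2 \<and>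
     ((w = sid \<sigma> div 2 \<and> 2 \<le> sid \<sigma> \<and> (\<exists>x. (sid \<sigma>, stt \<sigma> mod Suc r, x) \<in> set (sF \<sigma>))) \<or>
      (w \<noteq> sid \<sigma> div 2 \<and> (\<exists>x. knowsT \<sigma> (stt \<sigma> mod Suc r) x))))"

definition gmsgS :: "nat \<Rightarrow> St \<Rightarrow> (nat \<times> nat) list" where
  "gmsgS r \<sigma> = map (\<lambda>w. (w, msgf r \<sigma> w)) (filter (sendp r \<sigma>) [sid \<sigma> div 2, 2 * sid \<sigma>, 2 * sid \<sigma> + 1])"

definition outS :: "nat \<Rightarrow> St \<Rightarrow> nat" where
  "outS r \<sigma> = (if snn \<sigma> < 3 then 0 else if (\<forall>j<Suc r. \<exists>x. knowsT \<sigma> j x)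
     then (\<Sum>j<Suc r. snn \<sigma> ^ j * dnv \<sigma> j) else 0)"

definition alg :: "nat \<Rightarrow> hyb_alg" where
  "alg r = \<lparr>h_init = (\<lambda>n v N. to_nat (initS n v N)),
            h_lmsg = (\<lambda>x d. Suc (to_nat (sK (from_nat x :: St)))),
            h_gmsg = (\<lambda>x. gmsgS r (from_nat x)),
            h_step = (\<lambda>x li I. to_nat (stepS r (from_nat x) li I)),
            h_out = (\<lambda>x. outS r (from_nat x))\<rparr>"

fun reach :: "nat \<Rightarrow> (nat \<Rightarrow> nat \<Rightarrow> bool) \<Rightarrow> nat \<Rightarrow> nat \<Rightarrow> nat \<Rightarrow> bool" where
  "reach n E 0 v a = (a = v)"
| "reach n E (Suc t) v a = (reach n E t v a \<or> (\<exists>u\<in>{1..n}. E v u \<and> reach n E t u a))"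

fun dep :: "nat \<Rightarrow> nat" where
  "dep v = (if v \<le> 1 then 0 else Suc (dep (v div 2)))"

definition subtree :: "nat \<Rightarrow> nat \<Rightarrow> nat set" where
  "subtree n w = {u \<in> {1..n}. \<exists>i. u div 2 ^ i = w}"

definition cv :: "nat \<Rightarrow> (nat \<Rightarrow> nat \<Rightarrow> bool) \<Rightarrow> nat \<Rightarrow> nat \<Rightarrow> nat" where
  "cv n E r v = card {C \<in> r_cycles n E r. Min (\<Union>C) = v}"

definition DS :: "nat \<Rightarrow> (nat \<Rightarrow> nat \<Rightarrow> bool) \<Rightarrow> nat \<Rightarrow> nat \<Rightarrow> nat \<Rightarrow> nat" where
  "DS n E r w j = (\<Sum>u\<in>subtree n w. digit n j (cv n E r u))"


lemma digit_sum_mod: "(\<Sum>j<L. b ^ j * digit b j x) = x mod b ^ L"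
proof (induction L)
  case 0 then show ?case by simp
next
  case (Suc L)
  have "x mod b ^ Suc L = b ^ L * (x div b ^ L mod b) + x mod b ^ L"
    by (metis power_Suc2 mod_mult2_eq)
  then show ?case using Suc by (simp add: digit_def)
qed

lemma digit_sum: "x < b ^ L \<Longrightarrow> (\<Sum>j<L. b ^ j * digit b j x) = x"
  by (simp add: digit_sum_mod)

lemma digit_lt: "0 < b \<Longrightarrow> digit b j x < b"
  by (simp add: digit_def)

lemma div_pow_chain:
  fixes u :: nat
  assumes "i \<le> i'" shows "u div 2 ^ i' = (u div 2 ^ i) div 2 ^ (i' - i)"
proof -
  have "(2::nat) ^ i' = 2 ^ i * 2 ^ (i' - i)" using assms by (simp flip: power_add)
  then show ?thesis by (simp add: div_mult2_eq)
qed

lemma subtree_gt: "n < w \<Longrightarrow> subtree n w = {}"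
proof -
  assume "n < w"
  { fix u i assume "u \<in> {1..n}" "u div 2 ^ i = w"
    then have "u div 2 ^ i \<le> u" using div_le_dividend by blast
    with \<open>u \<in> {1..n}\<close> \<open>u div 2 ^ i = w\<close> \<open>n < w\<close> have False by simp }
  then show ?thesis unfolding subtree_def by blast
qed

lemma subtree_ge: "u \<in> subtree n w \<Longrightarrow> w \<le> u"
proof -
  assume "u \<in> subtree n w"
  then obtain i where "u div 2 ^ i = w" unfolding subtree_def by blast
  then show "w \<le> u" using div_le_dividend[of u "2^i"] by simp
qed

lemma subtree_fin: "finite (subtree n w)"
  unfolding subtree_def by simp

lemma exists_root: "1 \<le> (u::nat) \<Longrightarrow> \<exists>i. u div 2 ^ i = 1"
proof (induction u rule: less_induct)
  case (less u)
  show ?case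
  proof (cases "u = 1")
    case True then show ?thesis by (rule_tac x=0 in exI) simp
  next
    case False
    then have "1 \<le> u div 2" "u div 2 < u" using less.prems by auto
    then obtain i where "u div 2 div 2 ^ i = 1" using less.IH by blast
    then have "u div 2 ^ Suc i = 1" by (simp add: div_mult2_eq)
    then show ?thesis by blast
  qed
qed

lemma subtree_1: "subtree n 1 = {1..n}"
  unfolding subtree_def using exists_root by auto

lemma subtree_dec:
  assumes "1 \<le> w" "w \<le> n"
  shows "subtree n w = insert w (subtree n (2*w) \<union> subtree n (2*w+1))"
proof (intro equalityI subsetI)
  fix u assume u: "u \<in> subtree n w"
  then obtain i where ui: "u div 2 ^ i = w" and un: "u \<in> {1..n}" unfolding subtree_def by blast
  show "u \<in> insert w (subtree n (2*w) \<union> subtree n (2*w+1))"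
  proof (cases i)
    case 0 then show ?thesis using ui by simp
  next
    case (Suc i')
    define z where "z = u div 2 ^ i'"
    have "z div 2 = w" using ui Suc by (metis div_mult2_eq power_Suc2 z_def)
    then have "z = 2*w \<or> z = 2*w+1" by auto
    then show ?thesis using un unfolding subtree_def z_def by blast
  qed
next
  fix u assume "u \<in> insert w (subtree n (2*w) \<union> subtree n (2*w+1))"
  then consider "u = w" | "u \<in> subtree n (2*w)" | "u \<in> subtree n (2*w+1)" by blast
  then show "u \<in> subtree n w"
  proof cases
    case 1 then show ?thesis using assms unfolding subtree_def by (auto intro: exI[of _ 0])
  next
    case 2
    then obtain i where "u div 2 ^ i = 2*w" "u \<in> {1..n}" unfolding subtree_def by blast
    then have "u div 2 ^ Suc i = w" by (metis div_mult2_eq power_Suc2 nonzero_mult_div_cancel_left zero_neq_numeral div_mult_self1_is_m zero_less_numeral Suc_eq_plus1 div_mult_self1 add.commute div_less one_less_numeral_iff semiring_norm(76) add_0 mult.commute)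
    then show ?thesis using \<open>u \<in> {1..n}\<close> unfolding subtree_def by blast
  next
    case 3
    then obtain i where "u div 2 ^ i = 2*w+1" "u \<in> {1..n}" unfolding subtree_def by blast
    then have "u div 2 ^ Suc i = w" by (metis div_mult2_eq power_Suc2 nonzero_mult_div_cancel_left zero_neq_numeral div_mult_self1_is_m zero_less_numeral Suc_eq_plus1 div_mult_self1 add.commute div_less one_less_numeral_iff semiring_norm(76) add_0 mult.commute)
    then show ?thesis using \<open>u \<in> {1..n}\<close> unfolding subtree_def by blast
  qed
qed

lemma subtree_disj: assumes w1: "1 \<le> w" shows "subtree n (2*w) \<inter> subtree n (2*w+1) = {}"
proof (rule ccontr)
  assume "\<not> ?thesis"
  then obtain u i i' where a: "u div 2 ^ i = 2*w" and b: "u div 2 ^ i' = 2*w+1"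
    unfolding subtree_def by blast
  show False
  proof (cases "i \<le> i'")
    case True
    then have "2*w+1 = (2*w) div 2 ^ (i' - i)" using a b div_pow_chain[OF True, of u] by simp
    also have "\<dots> \<le> 2*w" by simp
    finally show False by simp
  next
    case False
    then have le: "i' \<le> i" "i - i' \<noteq> 0" by auto
    then have "2*w = (2*w+1) div 2 ^ (i - i')" using a b div_pow_chain[OF le(1), of u] by simp
    also have "\<dots> \<le> (2*w+1) div 2"
    proof -
      obtain d where "i - i' = Suc d" using le(2) not0_implies_Suc by blast
      then show ?thesis by (simp add: div_mult2_eq power_Suc2 div_le_mono)
    qed
    finally show False using w1 by simp
  qed
qed

lemma subtree_sum:
  assumes "1 \<le> w" "w \<le> n"
  shows "(\<Sum>u\<in>subtree n w. g u) = g w + (\<Sum>u\<in>subtree n (2*w). g u) + (\<Sum>u\<in>subtree n (2*w+1). g u)"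
proof -
  have nin: "w \<notin> subtree n (2*w) \<union> subtree n (2*w+1)"
  proof
    assume "w \<in> subtree n (2*w) \<union> subtree n (2*w+1)"
    then have "2*w \<le> w" using subtree_ge[of w n "2*w"] subtree_ge[of w n "2*w+1"] by auto
    then show False using assms by simp
  qed
  have "(\<Sum>u\<in>subtree n w. g u) = g w + (\<Sum>u\<in>subtree n (2*w) \<union> subtree n (2*w+1). g u)"
    apply (subst subtree_dec[OF assms])
    apply (rule sum.insert)
    using nin subtree_fin by auto
  also have "(\<Sum>u\<in>subtree n (2*w) \<union> subtree n (2*w+1). g u) = (\<Sum>u\<in>subtree n (2*w). g u) + (\<Sum>u\<in>subtree n (2*w+1). g u)"
    by (rule sum.union_disjoint) (use subtree_fin subtree_disj assms in auto)
  finally show ?thesis by (simp only: add.assoc)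
qed

lemma dep_double: "1 \<le> v \<Longrightarrow> dep (2*v) = Suc (dep v)"
  by simp
lemma dep_double1: "1 \<le> v \<Longrightarrow> dep (2*v+1) = Suc (dep v)"
  by simp
lemma dep_half: "2 \<le> v \<Longrightarrow> dep v = Suc (dep (v div 2))"
  by simp
declare dep.simps[simp del]

lemma dep_mono: "a \<le> b \<Longrightarrow> dep a \<le> dep b"
proof (induction b arbitrary: a rule: less_induct)
  case (less b)
  show ?case
  proof (cases "a \<le> 1")
    case True then show ?thesis by (simp add: dep.simps)
  next
    case False
    then have "dep a = Suc (dep (a div 2))" "dep b = Suc (dep (b div 2))" using less.prems
      by (simp_all add: dep.simps)
    moreover have "dep (a div 2) \<le> dep (b div 2)"
      using less.IH[of "b div 2" "a div 2"] less.prems False by (simp add: div_le_mono)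
    ultimately show ?thesis by simp
  qed
qed

lemma dep_pow: "1 \<le> v \<Longrightarrow> 2 ^ dep v \<le> v"
proof (induction v rule: less_induct)
  case (less v)
  show ?case
  proof (cases "v \<le> 1")
    case True then show ?thesis using less.prems by (simp add: dep.simps)
  next
    case False
    then have "dep v = Suc (dep (v div 2))" by (simp add: dep.simps)
    moreover have "2 ^ dep (v div 2) \<le> v div 2" using less.IH[of "v div 2"] False by simp
    ultimately show ?thesis by simp
  qed
qed

lemma exists_mod_window: "0 < L \<Longrightarrow> j < L \<Longrightarrow> \<exists>t'. a \<le> t' \<and> t' < a + L \<and> t' mod L = (j::nat)"
proof -
  assume L: "0 < L" "j < L"
  define t' where "t' = a + (j + L - a mod L) mod L"
  have "t' mod L = (a mod L + (j + L - a mod L)) mod L"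
    unfolding t'_def by (metis mod_add_left_eq mod_add_right_eq)
  also have "a mod L + (j + L - a mod L) = j + L" using L mod_less_divisor[of L a] by linarith
  finally have "t' mod L = j" using L by simp
  moreover have "t' < a + L" unfolding t'_def using L by simp
  moreover have "a \<le> t'" unfolding t'_def by simp
  ultimately show ?thesis by blast
qed


lemma cyc_union:
  assumes "0 < r"
  shows "\<Union>((\<lambda>i. {f i, f (Suc i mod r)}) ` {..<r}) = f ` {..<(r::nat)}"
proof (intro equalityI subsetI)
  fix x assume "x \<in> \<Union>((\<lambda>i. {f i, f (Suc i mod r)}) ` {..<r})"
  then obtain i where "i < r" "x = f i \<or> x = f (Suc i mod r)" by auto
  then show "x \<in> f ` {..<r}" using assms by auto
next
  fix x assume "x \<in> f ` {..<r}"
  then show "x \<in> \<Union>((\<lambda>i. {f i, f (Suc i mod r)}) ` {..<r})" by auto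
qed

lemma rc_sub:
  "r_cycles n E r \<subseteq> (\<lambda>g. (\<lambda>i. {g i, g (Suc i mod r)}) ` {..<r}) ` (PiE {..<r} (\<lambda>_. {1..n}))"
proof
  fix C assume "C \<in> r_cycles n E r"
  then obtain f where f: "3 \<le> r" "f ` {..<r} \<subseteq> {1..n}" "C = (\<lambda>i. {f i, f (Suc i mod r)}) ` {..<r}"
    unfolding r_cycles_def by blast
  define g where "g = restrict f {..<r}"
  have "g \<in> PiE {..<r} (\<lambda>_. {1..n})" using f(2) unfolding g_def by auto
  moreover have "C = (\<lambda>i. {g i, g (Suc i mod r)}) ` {..<r}"
    unfolding f(3) g_def using f(1) by (intro image_cong) auto
  ultimately show "C \<in> (\<lambda>g. (\<lambda>i. {g i, g (Suc i mod r)}) ` {..<r}) ` (PiE {..<r} (\<lambda>_. {1..n}))"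
    by blast
qed

lemma rc_fin: "finite (r_cycles n E r)"
  by (rule finite_subset[OF rc_sub]) (auto intro: finite_PiE)

lemma rc_card: "card (r_cycles n E r) \<le> n ^ r"
proof -
  have "card (r_cycles n E r) \<le> card ((\<lambda>g. (\<lambda>i. {g i, g (Suc i mod r)}) ` {..<r}) ` (PiE {..<r} (\<lambda>_. {1..n})))"
    by (rule card_mono[OF _ rc_sub]) (auto intro: finite_PiE)
  also have "\<dots> \<le> card (PiE {..<r} (\<lambda>_. {1..n::nat}))" by (rule card_image_le) (auto intro: finite_PiE)
  also have "\<dots> = n ^ r" by (simp add: card_PiE)
  finally show ?thesis .
qed

lemma rc_min:
  assumes "C \<in> r_cycles n E r"
  shows "Min (\<Union>C) \<in> {1..n}"
proof -
  obtain f where f: "3 \<le> r" "f ` {..<r} \<subseteq> {1..n}" "C = (\<lambda>i. {f i, f (Suc i mod r)}) ` {..<r}"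
    using assms unfolding r_cycles_def by blast
  have "\<Union>C = f ` {..<r}" using f cyc_union[of r f] by simp
  moreover have "f ` {..<r} \<noteq> {}" using f(1) by (simp add: lessThan_empty_iff)
  ultimately have "Min (\<Union>C) \<in> f ` {..<r}" by (metis Min_in finite_imageI finite_lessThan)
  then show ?thesis using f(2) by blast
qed

lemma rc_small: "r < 3 \<or> n < r \<Longrightarrow> r_cycles n E r = {}"
proof -
  assume a: "r < 3 \<or> n < r"
  { fix f assume "3 \<le> r" "inj_on f {..<r}" "f ` {..<r} \<subseteq> {1..n}"
    then have "card {..<r} \<le> card {1..n}" by (meson card_inj_on_le finite_atLeastAtMost)
    then have False using a \<open>3 \<le> r\<close> by simp }
  then show ?thesis unfolding r_cycles_def by blast
qed

lemma rc_partition: "card (r_cycles n E r) = (\<Sum>u\<in>{1..n}. cv n E r u)"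
proof -
  have "r_cycles n E r = (\<Union>u\<in>{1..n}. {C \<in> r_cycles n E r. Min (\<Union>C) = u})"
    using rc_min by blast
  then have "card (r_cycles n E r) = card (\<Union>u\<in>{1..n}. {C \<in> r_cycles n E r. Min (\<Union>C) = u})" by simp
  also have "\<dots> = (\<Sum>u\<in>{1..n}. card {C \<in> r_cycles n E r. Min (\<Union>C) = u})"
    by (rule card_UN_disjoint) (auto intro: finite_subset[OF _ rc_fin])
  finally show ?thesis unfolding cv_def .
qed

lemma reach_mono: "t \<le> t' \<Longrightarrow> reach n E t v a \<Longrightarrow> reach n E t' v a"
proof (induction t' arbitrary: t)
  case 0 then show ?case by simp
next
  case (Suc t')
  show ?case
  proof (cases "t = Suc t'")
    case True then show ?thesis using Suc.prems by simp
  next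
    case False
    then have "t \<le> t'" using Suc.prems(1) by simp
    then have "reach n E t' v a" using Suc.IH Suc.prems(2) by blast
    then show ?thesis by simp
  qed
qed

lemma reach_cycle:
  assumes "\<forall>i<r. E (f i) (f (Suc i mod r))" "f ` {..<r} \<subseteq> {1..n}" "i0 < r"
  shows "reach n E m (f i0) (f ((i0 + m) mod r))"
  using assms(3)
proof (induction m arbitrary: i0)
  case 0 then show ?case by simp
next
  case (Suc m)
  have r0: "0 < r" using Suc.prems by simp
  define i1 where "i1 = Suc i0 mod r"
  have i1r: "i1 < r" unfolding i1_def using r0 by simp
  have "reach n E m (f i1) (f ((i1 + m) mod r))" using Suc.IH[OF i1r] .
  moreover have "(i1 + m) mod r = (i0 + Suc m) mod r" unfolding i1_def
    by (simp add: mod_add_left_eq)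
  moreover have "E (f i0) (f i1)" using assms(1) Suc.prems unfolding i1_def by blast
  moreover have "f i1 \<in> {1..n}" using assms(2) i1r by blast
  ultimately show ?case by auto
qed

lemma cnt_eq:
  assumes KE: "\<forall>a b. K a b \<longrightarrow> E a b"
    and KR: "\<forall>a b. E a b \<and> reach n E t v a \<longrightarrow> K a b"
    and rt: "r \<le> t"
  shows "{C \<in> r_cycles n K r. Min (\<Union>C) = v} = {C \<in> r_cycles n E r. Min (\<Union>C) = v}"
proof (intro equalityI subsetI)
  fix C assume C: "C \<in> {C \<in> r_cycles n K r. Min (\<Union>C) = v}"
  then obtain f where f: "3 \<le> r" "inj_on f {..<r}" "f ` {..<r} \<subseteq> {1..n}"
      "\<forall>i<r. K (f i) (f (Suc i mod r))" "C = (\<lambda>i. {f i, f (Suc i mod r)}) ` {..<r}"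
    unfolding r_cycles_def by blast
  have "\<forall>i<r. E (f i) (f (Suc i mod r))" using f(4) KE by blast
  then have "C \<in> r_cycles n E r" unfolding r_cycles_def using f by (intro CollectI exI[of _ f]) simp
  then show "C \<in> {C \<in> r_cycles n E r. Min (\<Union>C) = v}" using C by simp
next
  fix C assume C: "C \<in> {C \<in> r_cycles n E r. Min (\<Union>C) = v}"
  then obtain f where f: "3 \<le> r" "inj_on f {..<r}" "f ` {..<r} \<subseteq> {1..n}"
      "\<forall>i<r. E (f i) (f (Suc i mod r))" "C = (\<lambda>i. {f i, f (Suc i mod r)}) ` {..<r}"
    unfolding r_cycles_def by blast
  have "\<Union>C = f ` {..<r}" using f cyc_union[of r f] by simp
  moreover have "f ` {..<r} \<noteq> {}" using f(1) by (simp add: lessThan_empty_iff)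
  ultimately have "v \<in> f ` {..<r}" using C by (metis (mono_tags, lifting) Min_in finite_imageI finite_lessThan mem_Collect_eq)
  then obtain i0 where i0: "i0 < r" "v = f i0" by auto
  have "\<forall>i<r. K (f i) (f (Suc i mod r))"
  proof (intro allI impI)
    fix i assume ir: "i < r"
    define m where "m = (r + i - i0) mod r"
    have "(i0 + m) mod r = (i0 + (r + i - i0)) mod r" unfolding m_def by (simp add: mod_add_right_eq)
    also have "i0 + (r + i - i0) = r + i" using i0 by simp
    finally have im: "(i0 + m) mod r = i" using ir by simp
    have "reach n E m (f i0) (f i)" using reach_cycle[OF f(4) f(3) i0(1), of m] im by simp
    moreover have "m < r" unfolding m_def using f(1) by simp
    then have "m \<le> t" using rt by simp
    ultimately have "reach n E t v (f i)" using reach_mono i0(2) by blast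
    then show "K (f i) (f (Suc i mod r))" using KR f(4) ir by blast
  qed
  then have "C \<in> r_cycles n K r" unfolding r_cycles_def using f by (intro CollectI exI[of _ f]) simp
  then show "C \<in> {C \<in> r_cycles n K r. Min (\<Union>C) = v}" using C by simp
qed

lemma DS_gt: "n < w \<Longrightarrow> DS n E r w j = 0"
  unfolding DS_def by (simp add: subtree_gt)

lemma DS_rec: "1 \<le> w \<Longrightarrow> w \<le> n \<Longrightarrow>
   DS n E r w j = digit n j (cv n E r w) + DS n E r (2*w) j + DS n E r (2*w+1) j"
  unfolding DS_def by (rule subtree_sum)

lemma DS_lt: assumes "2 \<le> n" shows "DS n E r w j < n ^ 2"
proof -
  have dl: "digit n j x \<le> n - 1" for x
  proof -
    have "digit n j x < n" using digit_lt[of n j x] assms by simp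
    then show ?thesis by linarith
  qed
  have "DS n E r w j \<le> (\<Sum>u\<in>subtree n w. (n - 1))"
    unfolding DS_def by (rule sum_mono) (rule dl)
  also have "\<dots> = card (subtree n w) * (n - 1)" by simp
  also have "\<dots> \<le> n * (n - 1)"
  proof -
    have "card (subtree n w) \<le> card {1..n}" by (rule card_mono) (auto simp: subtree_def)
    then show ?thesis by simp
  qed
  also have "\<dots> < n ^ 2" using assms by (simp add: power2_eq_square)
  finally show ?thesis .
qed

lemma cv_lt: assumes "2 \<le> n" shows "cv n E r u < n ^ Suc r"
proof -
  have "cv n E r u \<le> card (r_cycles n E r)" unfolding cv_def by (rule card_mono[OF rc_fin]) auto
  also have "\<dots> \<le> n ^ r" by (rule rc_card)
  also have "\<dots> < n ^ Suc r" using assms by simp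
  finally show ?thesis .
qed

lemma DS_total: assumes "2 \<le> n" shows "(\<Sum>j<Suc r. n ^ j * DS n E r 1 j) = num_r_cycles n E r"
proof -
  have "(\<Sum>j<Suc r. n ^ j * DS n E r 1 j) = (\<Sum>j<Suc r. \<Sum>u\<in>{1..n}. n ^ j * digit n j (cv n E r u))"
    unfolding DS_def subtree_1 by (simp add: sum_distrib_left)
  also have "\<dots> = (\<Sum>u\<in>{1..n}. \<Sum>j<Suc r. n ^ j * digit n j (cv n E r u))" by (rule sum.swap)
  also have "\<dots> = (\<Sum>u\<in>{1..n}. cv n E r u)" using digit_sum[OF cv_lt[OF assms]] by simp
  also have "\<dots> = num_r_cycles n E r" unfolding num_r_cycles_def by (simp add: rc_partition)
  finally show ?thesis .
qed


lemma gmsg_mem: "(w, m) \<in> set (gmsgS r \<sigma>) \<longleftrightarrow>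
   w \<in> {sid \<sigma> div 2, 2 * sid \<sigma>, 2 * sid \<sigma> + 1} \<and> sendp r \<sigma> w \<and> m = msgf r \<sigma> w"
  unfolding gmsgS_def by auto

lemma sym_E: "simple_graph n E \<Longrightarrow> E a b \<Longrightarrow> E b a"
  unfolding simple_graph_def by blast

lemma E_range: "simple_graph n E \<Longrightarrow> E a b \<Longrightarrow> a \<in> {1..n} \<and> b \<in> {1..n}"
  unfolding simple_graph_def by blast

lemma alg_simps:
  "h_init (alg r) n v N = to_nat (initS n v N)"
  "h_lmsg (alg r) x d = Suc (to_nat (sK (from_nat x :: St)))"
  "h_gmsg (alg r) x = gmsgS r (from_nat x)"
  "h_step (alg r) x li I = to_nat (stepS r (from_nat x) li I)"
  "h_out (alg r) x = outS r (from_nat x)"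
  unfolding alg_def by simp_all

lemma alg_lmsg: "h_lmsg (alg r) = (\<lambda>x d. Suc (to_nat (sK (from_nat x :: St))))"
  unfolding alg_def by simp

locale exec =
  fixes r n :: nat and E :: "nat \<Rightarrow> nat \<Rightarrow> bool" and k :: nat and s :: "nat \<Rightarrow> nat \<Rightarrow> nat"
  assumes sg: "simple_graph n E" and ex: "hyb_exec (alg r) n E k s"
begin

definition st :: "nat \<Rightarrow> nat \<Rightarrow> St" where "st t v = from_nat (s t v)"

definition LI :: "nat \<Rightarrow> nat \<Rightarrow> nat \<Rightarrow> nat" where
  "LI t v = (\<lambda>u. if u \<in> {1..n} \<and> E u v then Suc (to_nat (sK (st t u))) else 0)"

lemma st0: "v \<in> {1..n} \<Longrightarrow> st 0 v = initS n v {u \<in> {1..n}. E v u}"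
  using ex unfolding hyb_exec_def st_def by (simp add: alg_simps)

lemma stS: "\<exists>D. admissible_delivery n k (g_sent (alg r) n (s t)) D \<and>
   (\<forall>v\<in>{1..n}. st (Suc t) v = stepS r (st t v) (LI t v) {(u, m). (u, v, m) \<in> D})"
proof -
  obtain D where D: "admissible_delivery n k (g_sent (alg r) n (s t)) D"
    "\<forall>v\<in>{1..n}. s (Suc t) v = h_step (alg r) (s t v)
        (\<lambda>u. if u \<in> {1..n} \<and> E u v then h_lmsg (alg r) (s t u) v else 0) {(u, m). (u, v, m) \<in> D}"
    using ex unfolding hyb_exec_def by blast
  have "\<forall>v\<in>{1..n}. st (Suc t) v = stepS r (st t v) (LI t v) {(u, m). (u, v, m) \<in> D}"
    using D(2) unfolding st_def LI_def alg_lmsg by (simp add: alg_simps)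
  then show ?thesis using D(1) by blast
qed

lemma g_sent_eq: "g_sent (alg r) n (s t) = {(u, w, m). u \<in> {1..n} \<and> w \<in> {1..n} \<and> (w, m) \<in> set (gmsgS r (st t u))}"
  unfolding g_sent_def st_def by (simp add: alg_simps)

lemma fields: "v \<in> {1..n} \<Longrightarrow> sid (st t v) = v \<and> snn (st t v) = n \<and> stt (st t v) = t"
proof (induction t arbitrary: v)
  case 0 then show ?case using st0 by (simp add: initS_def)
next
  case (Suc t)
  obtain D where "\<forall>v\<in>{1..n}. st (Suc t) v = stepS r (st t v) (LI t v) {(u, m). (u, v, m) \<in> D}"
    using stS by blast
  then show ?case using Suc by (simp add: stepS_def)
qed

lemma sid_st[simp]: "v \<in> {1..n} \<Longrightarrow> sid (st t v) = v" using fields by blast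
lemma snn_st[simp]: "v \<in> {1..n} \<Longrightarrow> snn (st t v) = n" using fields by blast
lemma stt_st[simp]: "v \<in> {1..n} \<Longrightarrow> stt (st t v) = t" using fields by blast

lemma newK_set: assumes "v \<in> {1..n}"
  shows "set (newK (st t v) (LI t v)) = set (sK (st t v)) \<union> (\<Union>u\<in>{u \<in> {1..n}. E u v}. set (sK (st t u)))"
proof -
  have "set (newK (st t v) (LI t v)) = set (sK (st t v)) \<union> (\<Union>u\<in>{1..n}. if LI t v u = 0 then {} else set (from_nat (LI t v u - 1)))"
    unfolding newK_def using assms by (simp del: upt_Suc add: atLeastLessThanSuc_atLeastAtMost)
  also have "(\<Union>u\<in>{1..n}. if LI t v u = 0 then {} else set (from_nat (LI t v u - 1) :: (nat \<times> nat) list))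
     = (\<Union>u\<in>{u \<in> {1..n}. E u v}. set (sK (st t u)))"
    unfolding LI_def by auto
  finally show ?thesis .
qed

lemma Kinv: "v \<in> {1..n} \<Longrightarrow> (\<forall>(a, b)\<in>set (sK (st t v)). E a b) \<and>
    (\<forall>a b. E a b \<and> reach n E t v a \<longrightarrow> (a, b) \<in> set (sK (st t v)))"
proof (induction t arbitrary: v)
  case 0
  have "set (sK (st 0 v)) = {(v, u) | u. u \<in> {1..n} \<and> E v u}"
    using 0 st0 unfolding initS_def by (auto split: if_splits)
  then show ?case using E_range[OF sg] by auto
next
  case (Suc t)
  obtain D where D: "\<forall>v\<in>{1..n}. st (Suc t) v = stepS r (st t v) (LI t v) {(u, m). (u, v, m) \<in> D}"
    using stS by blast
  have K: "set (sK (st (Suc t) v)) = set (sK (st t v)) \<union> (\<Union>u\<in>{u \<in> {1..n}. E u v}. set (sK (st t u)))"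
    using D Suc.prems newK_set[OF Suc.prems, of t] by (simp add: stepS_def)
  have A: "\<forall>(a, b)\<in>set (sK (st (Suc t) v)). E a b"
    unfolding K using Suc.IH Suc.prems by blast
  have B: "(a, b) \<in> set (sK (st (Suc t) v))" if "E a b" "reach n E (Suc t) v a" for a b
  proof -
    from that(2) consider "reach n E t v a" | u where "u \<in> {1..n}" "E v u" "reach n E t u a" by auto
    then show ?thesis
    proof cases
      case 1 then show ?thesis unfolding K using Suc.IH[OF Suc.prems] that(1) by blast
    next
      case 2
      then have "(a, b) \<in> set (sK (st t u))" using Suc.IH that(1) by blast
      moreover have "E u v" using sym_E[OF sg 2(2)] .
      ultimately show ?thesis unfolding K using 2(1) by blast
    qed
  qed
  show ?case using A B by blast
qed

lemma cnt_st: assumes "v \<in> {1..n}" "r \<le> t" shows "cnt r (st t v) = cv n E r v"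
proof -
  have "{C \<in> r_cycles n (\<lambda>a b. (a, b) \<in> set (sK (st t v))) r. Min (\<Union>C) = v} = {C \<in> r_cycles n E r. Min (\<Union>C) = v}"
    by (rule cnt_eq[where t=t]) (use Kinv[OF assms(1), of t] assms(2) in auto)
  then show ?thesis unfolding cnt_def cv_def using assms(1) by simp
qed

end


locale exec3 = exec +
  assumes n3: "3 \<le> n" and k3: "3 \<le> k"
begin

definition GI :: "nat \<Rightarrow> nat \<Rightarrow> (nat \<times> nat) set" where
  "GI t v = {(u, m). u \<in> {1..n} \<and> (v, m) \<in> set (gmsgS r (st t u))}"

lemma GI_sub: assumes "v \<in> {1..n}"
  shows "GI t v \<subseteq> (\<lambda>u. (u, msgf r (st t u) v)) ` {2*v, 2*v+1, v div 2}"
proof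
  fix x assume "x \<in> GI t v"
  then obtain u m where x: "x = (u, m)" "u \<in> {1..n}" "(v, m) \<in> set (gmsgS r (st t u))"
    unfolding GI_def by blast
  then have "v \<in> {u div 2, 2 * u, 2 * u + 1}" "m = msgf r (st t u) v"
    using gmsg_mem[of v m r "st t u"] by auto
  then have "u \<in> {2*v, 2*v+1, v div 2}" by auto
  then show "x \<in> (\<lambda>u. (u, msgf r (st t u) v)) ` {2*v, 2*v+1, v div 2}"
    using x \<open>m = _\<close> by blast
qed

lemma GI_fin: "v \<in> {1..n} \<Longrightarrow> finite (GI t v)"
  using GI_sub finite_subset by blast

lemma GI_card: assumes "v \<in> {1..n}" shows "card (GI t v) \<le> 3"
proof -
  have "card (GI t v) \<le> card ((\<lambda>u. (u, msgf r (st t u) v)) ` {2*v, 2*v+1, v div 2})"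
    by (rule card_mono[OF _ GI_sub[OF assms]]) simp
  also have "\<dots> \<le> card {2*v, 2*v+1, v div 2}" by (rule card_image_le) simp
  also have "\<dots> \<le> 3" by (simp add: card_insert_le_m1)
  finally show ?thesis .
qed

lemma stS3: assumes "v \<in> {1..n}" shows "st (Suc t) v = stepS r (st t v) (LI t v) (GI t v)"
proof -
  obtain D where D: "admissible_delivery n k (g_sent (alg r) n (s t)) D"
    "\<forall>v\<in>{1..n}. st (Suc t) v = stepS r (st t v) (LI t v) {(u, m). (u, v, m) \<in> D}"
    using stS by blast
  have S: "{(u, m). (u, v, m) \<in> g_sent (alg r) n (s t)} = GI t v"
    unfolding g_sent_eq GI_def using assms by auto
  have sub: "{(u, m). (u, v, m) \<in> D} \<subseteq> GI t v"
    using D(1) S unfolding admissible_delivery_def by blast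
  have "card {(u, m). (u, v, m) \<in> D} = min k (card (GI t v))"
    using D(1) assms S unfolding admissible_delivery_def by auto
  also have "\<dots> = card (GI t v)" using GI_card[OF assms, of t] k3 by simp
  finally have "{(u, m). (u, v, m) \<in> D} = GI t v"
    using card_subset_eq[OF GI_fin[OF assms] sub] by simp
  then show ?thesis using D(2) assms by simp
qed

lemma GI_up:
  assumes "v \<in> {1..n}" "ch = 2*v \<or> ch = 2*v+1" "(ch, m) \<in> GI t v"
  shows "ch \<in> {1..n} \<and> m = upv (st t ch) (t mod Suc r) \<and> (\<exists>x. (ch, t mod Suc r, x) \<in> set (sF (st t ch)))"
proof -
  have ch: "ch \<in> {1..n}" "(v, m) \<in> set (gmsgS r (st t ch))" using assms(3) unfolding GI_def by auto
  then have sp: "sendp r (st t ch) v" "m = msgf r (st t ch) v" using gmsg_mem by blast+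
  have "v = ch div 2" using assms(2) by auto
  then show ?thesis using sp ch(1) unfolding sendp_def msgf_def by auto
qed

lemma GI_dn:
  assumes "v \<in> {1..n}" "2 \<le> v" "(v div 2, m) \<in> GI t v"
  shows "v div 2 \<in> {1..n} \<and> m = dnv (st t (v div 2)) (t mod Suc r) \<and> (\<exists>x. knowsT (st t (v div 2)) (t mod Suc r) x)"
proof -
  have p: "v div 2 \<in> {1..n}" "(v, m) \<in> set (gmsgS r (st t (v div 2)))" using assms(3) unfolding GI_def by auto
  then have sp: "sendp r (st t (v div 2)) v" "m = msgf r (st t (v div 2)) v" using gmsg_mem by blast+
  have "v \<noteq> v div 2 div 2" using assms(2) by auto
  then show ?thesis using sp p(1) unfolding sendp_def msgf_def by auto
qed

definition Tinv :: "nat \<Rightarrow> bool" where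
  "Tinv t = (\<forall>v\<in>{1..n}. (\<forall>(w, j, x)\<in>set (sF (st t v)). x = DS n E r w j) \<and>
      (\<forall>(j, x)\<in>set (sG (st t v)). x = DS n E r 1 j))"

lemma knowsT_true: "Tinv t \<Longrightarrow> v \<in> {1..n} \<Longrightarrow> knowsT (st t v) j x \<Longrightarrow> x = DS n E r 1 j"
  unfolding Tinv_def knowsT_def by (auto split: if_splits)

lemma Tinv_all: "Tinv t"
proof (induction t)
  case 0 then show ?case unfolding Tinv_def using st0 by (simp add: initS_def)
next
  case (Suc t)
  show ?case unfolding Tinv_def
  proof (rule ballI, rule conjI)
    fix v assume v: "v \<in> {1..n}"
    let ?\<sigma> = "st t v"
    let ?j = "t mod Suc r"
    have step: "st (Suc t) v = stepS r ?\<sigma> (LI t v) (GI t v)" using stS3[OF v] .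
    have oldF: "\<forall>(w, j, x)\<in>set (sF ?\<sigma>). x = DS n E r w j" using Suc.IH v unfolding Tinv_def by blast
    have rF: "\<forall>(w, j, x)\<in>set (rcvF r ?\<sigma> (GI t v)). x = DS n E r w j"
    proof (intro ballI, clarify)
      fix w j x assume a: "(w, j, x) \<in> set (rcvF r ?\<sigma> (GI t v))"
      then have w: "w = 2*v \<or> w = 2*v+1" "\<exists>m. (w, m) \<in> GI t v" "j = ?j" "x = (SOME m. (w, m) \<in> GI t v)"
        unfolding rcvF_def using v by (auto split: if_splits)
      then have "(w, x) \<in> GI t v" by (metis someI_ex)
      then have u: "w \<in> {1..n}" "x = upv (st t w) ?j" "\<exists>y. (w, ?j, y) \<in> set (sF (st t w))"
        using GI_up[OF v w(1)] by auto
      then have "(w, ?j, x) \<in> set (sF (st t w))" unfolding upv_def using u(1) someI_ex[OF u(3)]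
        by simp
      then show "x = DS n E r w j" using Suc.IH u(1) w(3) unfolding Tinv_def by blast
    qed
    have oF: "x = DS n E r w j" if a: "(w, j, x) \<in> set (ownnew r ?\<sigma>)" for w j x
    proof -
      from a have rt: "r \<le> t" and w: "w = v" and jj: "chok ?\<sigma> (2*v) j" "chok ?\<sigma> (2*v+1) j"
        and x: "x = digit n j (cnt r ?\<sigma>) + chval ?\<sigma> (2*v) j + chval ?\<sigma> (2*v+1) j"
        unfolding ownnew_def using v by (auto split: if_splits)
      have cv: "cnt r ?\<sigma> = cv n E r v" using cnt_st[OF v rt] .
      have chv: "chval ?\<sigma> ch j = DS n E r ch j" if ok: "chok ?\<sigma> ch j" for ch
      proof (cases "ch \<le> n")
        case True
        then obtain y where "(ch, j, y) \<in> set (sF ?\<sigma>)" using ok v unfolding chok_def by auto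
        then have "(ch, j, chval ?\<sigma> ch j) \<in> set (sF ?\<sigma>)" using True v unfolding chval_def
          by (simp add: someI[where P="\<lambda>x. (ch, j, x) \<in> set (sF ?\<sigma>)"])
        then show ?thesis using oldF by blast
      next
        case False then show ?thesis using v by (simp add: chval_def DS_gt)
      qed
      show "x = DS n E r w j" using x w cv chv[OF jj(1)] chv[OF jj(2)] DS_rec[of v n E r j] v by simp
    qed
    show "\<forall>(w, j, x)\<in>set (sF (st (Suc t) v)). x = DS n E r w j"
      using oldF rF oF step by (fastforce simp: stepS_def)
    have oldG: "\<forall>(j, x)\<in>set (sG ?\<sigma>). x = DS n E r 1 j" using Suc.IH v unfolding Tinv_def by blast
    have rG: "\<forall>(j, x)\<in>set (rcvG r ?\<sigma> (GI t v)). x = DS n E r 1 j"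
    proof (intro ballI, clarify)
      fix j x assume a: "(j, x) \<in> set (rcvG r ?\<sigma> (GI t v))"
      then have g: "2 \<le> v" "\<exists>m. (v div 2, m) \<in> GI t v" "x = (SOME m. (v div 2, m) \<in> GI t v)"
        unfolding rcvG_def using v by (auto split: if_splits)
      then have "(v div 2, x) \<in> GI t v" by (metis someI_ex)
      then have d: "v div 2 \<in> {1..n}" "x = dnv (st t (v div 2)) ?j" "\<exists>y. knowsT (st t (v div 2)) ?j y"
        using GI_dn[OF v g(1)] by auto
      then have "knowsT (st t (v div 2)) ?j x" unfolding dnv_def using someI_ex[OF d(3)] by simp
      then have "x = DS n E r 1 ?j" using knowsT_true[OF Suc.IH d(1)] by blast
      moreover have "j = ?j" using a v unfolding rcvG_def by (auto split: if_splits)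
      ultimately show "x = DS n E r 1 j" by simp
    qed
    show "\<forall>(j, x)\<in>set (sG (st (Suc t) v)). x = DS n E r 1 j"
      using oldG rG step by (auto simp: stepS_def)
  qed
qed

end


context exec3
begin

lemma F_mono1: "v \<in> {1..n} \<Longrightarrow> set (sF (st t v)) \<subseteq> set (sF (st (Suc t) v))"
  using stS3 by (auto simp: stepS_def)
lemma G_mono1: "v \<in> {1..n} \<Longrightarrow> set (sG (st t v)) \<subseteq> set (sG (st (Suc t) v))"
  using stS3 by (auto simp: stepS_def)
lemma F_mono: "v \<in> {1..n} \<Longrightarrow> t \<le> t' \<Longrightarrow> set (sF (st t v)) \<subseteq> set (sF (st t' v))"
  using lift_Suc_mono_le[of "\<lambda>t. set (sF (st t v))"] F_mono1 by blast
lemma G_mono: "v \<in> {1..n} \<Longrightarrow> t \<le> t' \<Longrightarrow> set (sG (st t v)) \<subseteq> set (sG (st t' v))"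
  using lift_Suc_mono_le[of "\<lambda>t. set (sG (st t v))"] G_mono1 by blast

lemma up_recv:
  assumes v: "v \<in> {1..n}" and ch: "ch = 2*v \<or> ch = 2*v+1" "ch \<le> n"
    and x: "(ch, t mod Suc r, x) \<in> set (sF (st t ch))"
  shows "\<exists>y. (ch, t mod Suc r, y) \<in> set (sF (st (Suc t) v))"
proof -
  let ?\<sigma> = "st t ch"
  let ?j = "t mod Suc r"
  have chn: "ch \<in> {1..n}" using ch v by auto
  have vd: "v = ch div 2" using ch by auto
  have ch2: "2 \<le> ch" using ch v by auto
  have "(ch, ?j, upv ?\<sigma> ?j) \<in> set (sF ?\<sigma>)" unfolding upv_def using chn someI[of "\<lambda>y. (ch, ?j, y) \<in> set (sF ?\<sigma>)", OF x] by simp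
  then have uv: "upv ?\<sigma> ?j = DS n E r ch ?j" using Tinv_all chn unfolding Tinv_def by blast
  have "msgf r ?\<sigma> v = upv ?\<sigma> ?j" unfolding msgf_def using chn vd by simp
  moreover have "sendp r ?\<sigma> v" unfolding sendp_def using chn vd n3 x ch2 uv DS_lt[of n E r ch ?j]
    by (auto simp: msgf_def)
  ultimately have "(v, upv ?\<sigma> ?j) \<in> set (gmsgS r ?\<sigma>)" using gmsg_mem chn vd by force
  then have inI: "(ch, upv ?\<sigma> ?j) \<in> GI t v" unfolding GI_def using chn by blast
  then have "(ch, ?j, SOME m. (ch, m) \<in> GI t v) \<in> set (rcvF r (st t v) (GI t v))"
    unfolding rcvF_def using v ch by auto
  then show ?thesis using stS3[OF v] by (auto simp: stepS_def)
qed

lemma own_new: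
  assumes v: "v \<in> {1..n}" and rt: "r \<le> t" and j: "j < Suc r"
    and c: "\<forall>ch\<in>{2*v, 2*v+1}. n < ch \<or> (\<exists>x. (ch, j, x) \<in> set (sF (st t v)))"
  shows "\<exists>x. (v, j, x) \<in> set (sF (st (Suc t) v))"
proof -
  have "chok (st t v) (2*v) j" "chok (st t v) (2*v+1) j" using c v unfolding chok_def by auto
  then have "(v, j, digit n j (cnt r (st t v)) + chval (st t v) (2 * v) j + chval (st t v) (2 * v + 1) j)
     \<in> set (ownnew r (st t v))" unfolding ownnew_def using v rt j by (force simp del: upt_Suc)
  then show ?thesis using stS3[OF v] by (auto simp: stepS_def)
qed

definition tau :: "nat \<Rightarrow> nat" where
  "tau v = r + 1 + (r + 2) * (dep n - dep v)"

lemma up_progress: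
  "v \<in> {1..n} \<Longrightarrow> tau v \<le> t \<Longrightarrow> j < Suc r \<Longrightarrow> \<exists>x. (v, j, x) \<in> set (sF (st t v))"
proof (induction "n - v" arbitrary: v t j rule: less_induct)
  case less
  note v = less.prems(1)
  define t0 where "t0 = tau v - 1"
  have rt0: "r \<le> t0" unfolding t0_def tau_def by simp
  have c: "\<forall>ch\<in>{2*v, 2*v+1}. n < ch \<or> (\<exists>x. (ch, j, x) \<in> set (sF (st t0 v)))"
  proof
    fix ch assume chs: "ch \<in> {2*v, 2*v+1}"
    show "n < ch \<or> (\<exists>x. (ch, j, x) \<in> set (sF (st t0 v)))"
    proof (cases "ch \<le> n")
      case False then show ?thesis by simp
    next
      case True
      have chn: "ch \<in> {1..n}" using True chs v by auto
      have dch: "dep ch = Suc (dep v)" using chs v dep_double dep_double1 by auto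
      have "dep ch \<le> dep n" using True dep_mono by blast
      then obtain d where d: "dep n - dep v = Suc d" "dep n - dep ch = d" using dch
        by (metis Suc_diff_le diff_Suc_Suc)
      have tv: "tau v = tau ch + (r + 2)" unfolding tau_def d by simp
      obtain t' where t': "tau ch \<le> t'" "t' < tau ch + Suc r" "t' mod Suc r = j"
        using exists_mod_window[of "Suc r" j "tau ch"] less.prems(3) by auto
      have "n - ch < n - v" using chs True v by auto
      then obtain x where "(ch, j, x) \<in> set (sF (st t' ch))"
        using less.hyps[of ch t' j] chn t' less.prems(3) by blast
      then obtain y where "(ch, j, y) \<in> set (sF (st (Suc t') v))"
        using up_recv[OF v _ True, of t' x] chs t'(3) by auto
      moreover have "Suc t' \<le> t0" unfolding t0_def tv using t'(2) by simp
      ultimately show ?thesis using F_mono[OF v] by blast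
    qed
  qed
  obtain x where "(v, j, x) \<in> set (sF (st (Suc t0) v))" using own_new[OF v rt0 less.prems(3) c] by blast
  moreover have "Suc t0 \<le> t" unfolding t0_def using less.prems(2) unfolding tau_def by simp
  ultimately show ?case using F_mono[OF v] by blast
qed

lemma dn_recv:
  assumes v: "v \<in> {1..n}" and v2: "2 \<le> v" and x: "knowsT (st t (v div 2)) (t mod Suc r) x"
  shows "\<exists>y. (t mod Suc r, y) \<in> set (sG (st (Suc t) v))"
proof -
  let ?p = "v div 2"
  let ?\<sigma> = "st t ?p"
  let ?j = "t mod Suc r"
  have pn: "?p \<in> {1..n}" using v v2 by auto
  have kd: "knowsT ?\<sigma> ?j (dnv ?\<sigma> ?j)" unfolding dnv_def using x by (rule someI)
  then have dv: "dnv ?\<sigma> ?j = DS n E r 1 ?j" using knowsT_true[OF Tinv_all pn] by blast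
  have ne: "v \<noteq> ?p div 2" using v2 by auto
  have "msgf r ?\<sigma> v = dnv ?\<sigma> ?j" unfolding msgf_def using pn ne by simp
  moreover have "sendp r ?\<sigma> v" unfolding sendp_def using pn ne n3 x dv DS_lt[of n E r 1 ?j] v2
    by (auto simp: msgf_def)
  moreover have "v \<in> {?p div 2, 2 * ?p, 2 * ?p + 1}" by auto
  ultimately have "(v, dnv ?\<sigma> ?j) \<in> set (gmsgS r ?\<sigma>)" using gmsg_mem pn by force
  then have "(?p, dnv ?\<sigma> ?j) \<in> GI t v" unfolding GI_def using pn by blast
  then have "(?j, SOME m. (?p, m) \<in> GI t v) \<in> set (rcvG r (st t v) (GI t v))"
    unfolding rcvG_def using v v2 by auto
  then show ?thesis using stS3[OF v] by (auto simp: stepS_def)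
qed

lemma dn_progress:
  "v \<in> {1..n} \<Longrightarrow> tau 1 + (r + 2) * dep v \<le> t \<Longrightarrow> j < Suc r \<Longrightarrow> \<exists>x. knowsT (st t v) j x"
proof (induction v arbitrary: t j rule: less_induct)
  case (less v)
  note v = less.prems(1)
  show ?case
  proof (cases "v = 1")
    case True
    then have "tau 1 \<le> t" using less.prems by (simp add: dep.simps)
    then show ?thesis using up_progress[of 1 t j] less.prems True by (simp add: knowsT_def)
  next
    case False
    then have v2: "2 \<le> v" using v by auto
    have pn: "v div 2 \<in> {1..n}" "v div 2 < v" using v v2 by auto
    have dv: "dep v = Suc (dep (v div 2))" using dep_half[OF v2] .
    obtain t' where t': "tau 1 + (r + 2) * dep (v div 2) \<le> t'" "t' < tau 1 + (r + 2) * dep (v div 2) + Suc r"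
       "t' mod Suc r = j"
      using exists_mod_window[of "Suc r" j] less.prems(3) by blast
    obtain x where "knowsT (st t' (v div 2)) j x" using less.IH[OF pn(2) pn(1) t'(1) less.prems(3)] by blast
    then obtain y where "(j, y) \<in> set (sG (st (Suc t') v))" using dn_recv[OF v v2] t'(3) by blast
    moreover have "Suc t' \<le> t" using t'(2) less.prems(2) dv by simp
    ultimately have "(j, y) \<in> set (sG (st t v))" using G_mono[OF v] by blast
    then show ?thesis using False v unfolding knowsT_def by auto
  qed
qed

lemma out_val:
  assumes v: "v \<in> {1..n}"
  shows "outS r (st t v) = 0 \<or> outS r (st t v) = num_r_cycles n E r"
proof (cases "\<forall>j<Suc r. \<exists>x. knowsT (st t v) j x")
  case True
  have "dnv (st t v) j = DS n E r 1 j" if "j < Suc r" for j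
  proof -
    have "knowsT (st t v) j (dnv (st t v) j)" unfolding dnv_def using True that by (meson someI)
    then show ?thesis using knowsT_true[OF Tinv_all v] by blast
  qed
  then have "outS r (st t v) = (\<Sum>j<Suc r. n ^ j * DS n E r 1 j)"
    unfolding outS_def using True v n3 by simp
  also have "\<dots> = num_r_cycles n E r" using DS_total n3 by simp
  finally show ?thesis by simp
next
  case False
  then have "outS r (st t v) = 0" unfolding outS_def by (simp only: if_False) simp
  then show ?thesis by simp
qed

lemma out_correct:
  assumes v: "v \<in> {1..n}" and t: "tau 1 + (r + 2) * dep n \<le> t"
  shows "outS r (st t v) = num_r_cycles n E r"
proof -
  have "dep v \<le> dep n" using v dep_mono by simp
  then have "tau 1 + (r + 2) * dep v \<le> t" using t by (meson add_left_mono le_trans mult_le_mono2)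
  then have all: "\<forall>j<Suc r. \<exists>x. knowsT (st t v) j x" using dn_progress[OF v] by blast
  have "dnv (st t v) j = DS n E r 1 j" if "j < Suc r" for j
  proof -
    have "knowsT (st t v) j (dnv (st t v) j)" unfolding dnv_def using all that by (meson someI)
    then show ?thesis using knowsT_true[OF Tinv_all v] by blast
  qed
  then have "outS r (st t v) = (\<Sum>j<Suc r. n ^ j * DS n E r 1 j)"
    unfolding outS_def using all v n3 by simp
  also have "\<dots> = num_r_cycles n E r" using DS_total n3 by simp
  finally show ?thesis .
qed

end


context exec
begin

lemma bw: assumes v: "v \<in> {1..n}" and kk: "n < 3 \<or> (3 \<le> k \<and> n ^ 2 \<le> 2 ^ k)"
  shows "respects_global_bw k (gmsgS r (st t v))"
proof (cases "n < 3")
  case True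
  then have "gmsgS r (st t v) = []" unfolding gmsgS_def sendp_def using v by simp
  then show ?thesis unfolding respects_global_bw_def by simp
next
  case False
  then have k: "3 \<le> k" "n ^ 2 \<le> 2 ^ k" using kk by auto
  have "length (gmsgS r (st t v)) \<le> 3" unfolding gmsgS_def
    using length_filter_le[of "sendp r (st t v)" "[sid (st t v) div 2, 2 * sid (st t v), 2 * sid (st t v) + 1]"]
    by simp
  moreover have "\<forall>(w, m)\<in>set (gmsgS r (st t v)). m < 2 ^ k"
  proof (clarify)
    fix w m assume "(w, m) \<in> set (gmsgS r (st t v))"
    then have "sendp r (st t v) w" "m = msgf r (st t v) w" using gmsg_mem by blast+
    then have "m < n ^ 2" unfolding sendp_def using v by simp
    then show "m < 2 ^ k" using k by simp
  qed
  ultimately show ?thesis unfolding respects_global_bw_def using k by simp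
qed

end

lemma cap_facts:
  assumes n: "3 \<le> n"
  shows "3 \<le> cap 8 n \<and> n ^ 2 \<le> 2 ^ cap 8 n"
proof -
  have L1: "1 \<le> log 2 (real n)" using n by simp
  have ck: "8 * log 2 (real n) \<le> real (cap 8 n)" unfolding cap_def by linarith
  have "3 \<le> real (cap 8 n)" using L1 ck by linarith
  then have c3: "3 \<le> cap 8 n" by simp
  have "log 2 (real (n ^ 2)) = 2 * log 2 (real n)" using n by (simp add: log_nat_power)
  also have "\<dots> \<le> real (cap 8 n)" using ck L1 by linarith
  finally have "real (n ^ 2) \<le> 2 powr real (cap 8 n)" using n by (simp add: log_le_iff del: of_nat_power)
  then have "real (n ^ 2) \<le> real (2 ^ cap 8 n)" by (simp add: powr_realpow)
  then have "n ^ 2 \<le> 2 ^ cap 8 n" by linarith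
  with c3 show ?thesis by simp
qed

lemma time_arith:
  fixes r D :: nat and L :: real
  assumes r: "3 \<le> r" and L: "1 \<le> L" and D: "real D \<le> L"
  shows "real (r + 1 + (r + 2) * D + (r + 2) * D) \<le> real (r - 1) * 8 * L"
proof -
  have a: "real (r + 1) \<le> real (r + 1) * L" using L by simp
  have b: "real (r + 2) * real D \<le> real (r + 2) * L" using D by (simp add: mult_left_mono)
  have "real (r + 1 + (r + 2) * D + (r + 2) * D) = real (r + 1) + 2 * (real (r + 2) * real D)" by (simp add: algebra_simps)
  also have "\<dots> \<le> real (r + 1) * L + 2 * (real (r + 2) * L)" using a b by linarith
  also have "\<dots> = (3 * real r + 5) * L" by (simp add: algebra_simps)
  also have "\<dots> \<le> (8 * real r - 8) * L" using r L by (intro mult_right_mono) auto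
  also have "\<dots> = real (r - 1) * 8 * L" using r by (simp add: of_nat_diff algebra_simps)
  finally show ?thesis .
qed

theorem proposition36:
  shows "\<exists>c::real. c > 0 \<and> (\<forall>r::nat. \<exists>A::hyb_alg. \<forall>n::nat. \<forall>E.
     1 \<le> n \<longrightarrow> simple_graph n E \<longrightarrow>
     (\<forall>s. hyb_exec A n E (cap c n) s \<longrightarrow>
        (\<forall>t. \<forall>v\<in>{1..n}. respects_global_bw (cap c n) (h_gmsg A (s t v))) \<and>
        (\<forall>t. real t \<ge> real (r - 1) * c * log 2 (real n) \<longrightarrow>
             (\<forall>v\<in>{1..n}. h_out A (s t v) = num_r_cycles n E r))))"
proof (intro exI[of _ 8] conjI allI impI)
  show "(0::real) < 8" by simp
next
  fix r
  show "\<exists>A::hyb_alg. \<forall>n::nat. \<forall>E.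
     1 \<le> n \<longrightarrow> simple_graph n E \<longrightarrow>
     (\<forall>s. hyb_exec A n E (cap 8 n) s \<longrightarrow>
        (\<forall>t. \<forall>v\<in>{1..n}. respects_global_bw (cap 8 n) (h_gmsg A (s t v))) \<and>
        (\<forall>t. real t \<ge> real (r - 1) * 8 * log 2 (real n) \<longrightarrow>
             (\<forall>v\<in>{1..n}. h_out A (s t v) = num_r_cycles n E r)))"
  proof (intro exI[of _ "alg r"] allI impI conjI ballI)
    fix n E s t v
    assume n1: "1 \<le> n" and sg: "simple_graph n E" and ex: "hyb_exec (alg r) n E (cap 8 n) s"
      and v: "v \<in> {1..n}"
    interpret exec r n E "cap 8 n" s using sg ex by unfold_locales
    have kk: "n < 3 \<or> (3 \<le> cap 8 n \<and> n ^ 2 \<le> 2 ^ cap 8 n)"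
    proof (cases "n < 3")
      case True then show ?thesis by simp
    next
      case False then show ?thesis using cap_facts[of n] by simp
    qed
    show "respects_global_bw (cap 8 n) (h_gmsg (alg r) (s t v))"
      using bw[OF v kk] by (simp add: alg_simps st_def)
  next
    fix n E s t v
    assume n1: "1 \<le> n" and sg: "simple_graph n E" and ex: "hyb_exec (alg r) n E (cap 8 n) s"
      and tt: "real (r - 1) * 8 * log 2 (real n) \<le> real t" and v: "v \<in> {1..n}"
    interpret exec r n E "cap 8 n" s using sg ex by unfold_locales
    have ho: "h_out (alg r) (s t v) = outS r (st t v)" by (simp add: alg_simps st_def)
    show "h_out (alg r) (s t v) = num_r_cycles n E r"
    proof (cases "n < 3")
      case True
      then have "r < 3 \<or> n < r" by linarith
      then have "num_r_cycles n E r = 0" unfolding num_r_cycles_def using rc_small[of r n E] by simp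
      moreover have "outS r (st t v) = 0" unfolding outS_def using True v by simp
      ultimately show ?thesis using ho by simp
    next
      case False
      then have n3: "3 \<le> n" by simp
      have c3: "3 \<le> cap 8 n" using cap_facts[OF n3] by simp
      interpret exec3 r n E "cap 8 n" s by unfold_locales (rule n3, rule c3)
      show ?thesis
      proof (cases "r < 3")
        case True
        then have "num_r_cycles n E r = 0" unfolding num_r_cycles_def using rc_small[of r n E] by simp
        from out_val[OF v, of t] show ?thesis using ho \<open>num_r_cycles n E r = 0\<close> by (elim disjE) simp_all
      next
        case False
        then have r3: "3 \<le> r" by simp
        have "2 ^ dep n \<le> n" using dep_pow n1 by simp
        then have D: "real (dep n) \<le> log 2 (real n)" using le_log2_of_power by blast
        have L: "1 \<le> log 2 (real n)" using n3 by simp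
        have "real (r + 1 + (r + 2) * dep n + (r + 2) * dep n) \<le> real t"
          using time_arith[OF r3 L D] tt by linarith
        then have "r + 1 + (r + 2) * dep n + (r + 2) * dep n \<le> t" by (simp only: of_nat_le_iff)
        moreover have "tau 1 = r + 1 + (r + 2) * dep n" unfolding tau_def using dep.simps[of 1] by simp
        ultimately have "tau 1 + (r + 2) * dep n \<le> t" by simp
        then show ?thesis using out_correct[OF v] ho by simp
      qed
    qed
  qed
qed

end
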